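(* Let $X$ be an FK-space containing $\phi$, and let $\overline{\phi}$ denote the closure of $\phi$ in $X$. If $Y$ is an FK-space with $\overline{\phi}\subseteq Y\subseteq X$, then $D_p^qB^+(Y)=D_p^qB^+(X)$.
   Context: An FK-space is a vector subspace of the space $w$ of all complex sequences with a complete metrizable locally convex topology in which coordinate functionals are continuous; $X'$ is its continuous dual. $\delta^j$ has $1$ in position $j$, $0$ elsewhere; $\phi=\operatorname{span}\{\delta^j\}$. $p(n)<q(n)$ are nonnegative integer sequences with $q(n)\to\infty$. For an FK-space $X\supseteq\phi$, $D_p^qB^+(X)=\{x\in w:\sup_n|\frac{1}{q(n)-p(n)}\sum_{k=p(n)+1}^{q(n)}\sum_{j=1}^kx_jf(\delta^j)|<\infty\ \forall f\in X'\}$. *)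

theory Defs
  imports "HOL-Analysis.Analysis"
begin

text \<open>Complex sequences are modelled as functions nat => complex; position j (0-based)
  corresponds to the paper's position j+1.\<close>

type_synonym seq = "nat \<Rightarrow> complex"

definition delta :: "nat \<Rightarrow> seq" where
  "delta j = (\<lambda>i. if i = j then 1 else 0)"

definition phi :: "seq set" where
  "phi = {(\<lambda>i. \<Sum>j\<in>F. c j * delta j i) | F c. finite F}"

definition linear_subspace :: "seq set \<Rightarrow> bool" where
  "linear_subspace X \<longleftrightarrow> (\<lambda>i. 0) \<in> X \<and>
     (\<forall>x\<in>X. \<forall>y\<in>X. (\<lambda>i. x i + y i) \<in> X) \<and>
     (\<forall>c::complex. \<forall>x\<in>X. (\<lambda>i. c * x i) \<in> X)"

definition vector_topology :: "seq set \<Rightarrow> seq topology \<Rightarrow> bool" where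
  "vector_topology X T \<longleftrightarrow> topspace T = X \<and>
     continuous_map (prod_topology T T) T (\<lambda>(x, y). (\<lambda>i. x i + y i)) \<and>
     continuous_map (prod_topology (euclidean :: complex topology) T) T
        (\<lambda>(c, x). (\<lambda>i. c * x i))"

definition convex_seqset :: "seq set \<Rightarrow> bool" where
  "convex_seqset V \<longleftrightarrow> (\<forall>x\<in>V. \<forall>y\<in>V. \<forall>u::real. 0 \<le> u \<and> u \<le> 1 \<longrightarrow>
      (\<lambda>i. complex_of_real u * x i + complex_of_real (1 - u) * y i) \<in> V)"

definition locally_convex :: "seq topology \<Rightarrow> bool" where
  "locally_convex T \<longleftrightarrow> (\<forall>U. openin T U \<and> (\<lambda>i. 0) \<in> U \<longrightarrow>
      (\<exists>V. openin T V \<and> (\<lambda>i. 0) \<in> V \<and> V \<subseteq> U \<and> convex_seqset V))"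

definition complete_metrizable :: "seq set \<Rightarrow> seq topology \<Rightarrow> bool" where
  "complete_metrizable X T \<longleftrightarrow> (\<exists>d. Metric_space X d \<and> Metric_space.mcomplete X d \<and>
      Metric_space.mtopology X d = T)"

definition FK_space :: "seq set \<Rightarrow> seq topology \<Rightarrow> bool" where
  "FK_space X T \<longleftrightarrow> linear_subspace X \<and> vector_topology X T \<and> locally_convex T \<and>
     complete_metrizable X T \<and>
     (\<forall>j. continuous_map T (euclidean :: complex topology) (\<lambda>x. x j))"

definition dual :: "seq set \<Rightarrow> seq topology \<Rightarrow> (seq \<Rightarrow> complex) set" where
  "dual X T = {f. continuous_map T (euclidean :: complex topology) f \<and>
     (\<forall>x\<in>X. \<forall>y\<in>X. f (\<lambda>i. x i + y i) = f x + f y) \<and>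
     (\<forall>c. \<forall>x\<in>X. f (\<lambda>i. c * x i) = c * f x)}"

text \<open>D_p^q B^+(X), reindexed 0-based: paper's k in {p(n)+1..q(n)} becomes {p(n)..<q(n)},
  paper's j in {1..k} becomes {0..k}.\<close>
definition DqpBplus :: "(nat \<Rightarrow> nat) \<Rightarrow> (nat \<Rightarrow> nat) \<Rightarrow> seq set \<Rightarrow> seq topology \<Rightarrow> seq set" where
  "DqpBplus p q X T = {x. \<forall>f\<in>dual X T. bounded (range (\<lambda>n.
      (1 / of_nat (q n - p n)) * (\<Sum>k\<in>{p n..<q n}. \<Sum>j\<in>{0..k}. x j * f (delta j))))}"

end

theory Submission
  imports Defs
begin

definition vadd :: "seq \<Rightarrow> seq \<Rightarrow> seq" where "vadd x y = (\<lambda>i. x i + y i)"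
definition vsc :: "complex \<Rightarrow> seq \<Rightarrow> seq" where "vsc c x = (\<lambda>i. c * x i)"
definition vsub :: "seq \<Rightarrow> seq \<Rightarrow> seq" where "vsub x y = (\<lambda>i. x i - y i)"
definition zv :: seq where "zv = (\<lambda>i. 0)"

lemmas valg = vadd_def vsc_def vsub_def zv_def

lemma vsub_eq: "vsub x y = vadd x (vsc (-1) y)" by (simp add: valg)

lemma phi_eq: "phi = {x::seq. finite {j. x j \<noteq> 0}}"
proof (intro set_eqI iffI)
  fix x :: seq assume "x \<in> phi"
  then obtain F c where F: "finite F" "x = (\<lambda>i. \<Sum>j\<in>F. c j * delta j i)"
    unfolding phi_def by blast
  have "{j. x j \<noteq> 0} \<subseteq> F"
  proof
    fix i assume "i \<in> {j. x j \<noteq> 0}"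
    then have "(\<Sum>j\<in>F. c j * delta j i) \<noteq> 0" using F by simp
    then obtain j where "j \<in> F" "c j * delta j i \<noteq> 0" by (meson sum.neutral)
    then show "i \<in> F" by (auto simp: delta_def split: if_splits)
  qed
  then show "x \<in> {x. finite {j. x j \<noteq> 0}}" using F finite_subset by auto
next
  fix x :: seq assume "x \<in> {x. finite {j. x j \<noteq> 0}}"
  then have fin: "finite {j. x j \<noteq> 0}" by simp
  have "x = (\<lambda>i. \<Sum>j\<in>{j. x j \<noteq> 0}. x j * delta j i)"
  proof
    fix i
    have "(\<Sum>j\<in>{j. x j \<noteq> 0}. x j * delta j i) = (\<Sum>j\<in>{j. x j \<noteq> 0}. if j = i then x i else 0)"
      by (rule sum.cong) (auto simp: delta_def)
    also have "\<dots> = x i" using fin by (simp add: sum.delta)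
    finally show "x i = (\<Sum>j\<in>{j. x j \<noteq> 0}. x j * delta j i)" by simp
  qed
  then show "x \<in> phi" unfolding phi_def using fin by blast
qed

lemma delta_phi: "delta j \<in> phi"
  unfolding phi_eq by (simp add: delta_def)

locale tvs =
  fixes X :: "seq set" and T :: "seq topology"
  assumes lin: "linear_subspace X" and vt: "vector_topology X T"
begin

lemma topX[simp]: "topspace T = X" using vt by (simp add: vector_topology_def)
lemma zero_in[simp]: "zv \<in> X" using lin by (simp add: linear_subspace_def zv_def)
lemma add_in[simp]: "x \<in> X \<Longrightarrow> y \<in> X \<Longrightarrow> vadd x y \<in> X"
  using lin by (simp add: linear_subspace_def vadd_def)
lemma sc_in[simp]: "x \<in> X \<Longrightarrow> vsc c x \<in> X"
  using lin by (simp add: linear_subspace_def vsc_def)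
lemma sub_in[simp]: "x \<in> X \<Longrightarrow> y \<in> X \<Longrightarrow> vsub x y \<in> X"
  by (simp add: vsub_eq)

lemma cadd: "continuous_map (prod_topology T T) T (\<lambda>(x,y). vadd x y)"
  using vt by (simp add: vector_topology_def vadd_def case_prod_unfold)
lemma csc: "continuous_map (prod_topology euclidean T) T (\<lambda>(c,x). vsc c x)"
  using vt by (simp add: vector_topology_def vsc_def case_prod_unfold)

lemma cont_add2:
  assumes "continuous_map Z T f" "continuous_map Z T g"
  shows "continuous_map Z T (\<lambda>z. vadd (f z) (g z))"
proof -
  have "continuous_map Z T ((\<lambda>(x,y). vadd x y) \<circ> (\<lambda>z. (f z, g z)))"
    by (rule continuous_map_compose[OF continuous_map_pairedI[OF assms] cadd])
  then show ?thesis by (simp add: o_def)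
qed

lemma cont_sc2:
  assumes "continuous_map Z euclidean c" "continuous_map Z T f"
  shows "continuous_map Z T (\<lambda>z. vsc (c z) (f z))"
proof -
  have "continuous_map Z T ((\<lambda>(c,x). vsc c x) \<circ> (\<lambda>z. (c z, f z)))"
    by (rule continuous_map_compose[OF continuous_map_pairedI[OF assms] csc])
  then show ?thesis by (simp add: o_def)
qed

lemma cont_sub2:
  assumes "continuous_map Z T f" "continuous_map Z T g"
  shows "continuous_map Z T (\<lambda>z. vsub (f z) (g z))"
  unfolding vsub_eq by (intro cont_add2 cont_sc2 assms continuous_map_const[THEN iffD2]) auto

lemma cont_const: "a \<in> X \<Longrightarrow> continuous_map Z T (\<lambda>z. a)"
  by simp

lemma cont_id: "continuous_map T T (\<lambda>x. x)"
  by simp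

lemma open_pre:
  assumes "continuous_map T T h" "openin T U"
  shows "openin T {x\<in>X. h x \<in> U}"
  using openin_continuous_map_preimage[OF assms] by simp

lemma nbhd_binop:
  assumes h: "continuous_map (prod_topology T T) T h" and U: "openin T U"
    and hab: "h (a,b) \<in> U" and ab: "a \<in> X" "b \<in> X"
  shows "\<exists>A B. openin T A \<and> openin T B \<and> a \<in> A \<and> b \<in> B \<and> (\<forall>x\<in>A. \<forall>y\<in>B. h (x,y) \<in> U)"
proof -
  define P where "P = {z \<in> topspace (prod_topology T T). h z \<in> U}"
  have "openin (prod_topology T T) P"
    unfolding P_def using openin_continuous_map_preimage[OF h U] .
  moreover have "(a,b) \<in> P" using hab ab by (simp add: P_def)
  ultimately have "\<exists>A B. openin T A \<and> openin T B \<and> a \<in> A \<and> b \<in> B \<and> A \<times> B \<subseteq> P"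
    by (rule openin_prod_topology_alt[THEN iffD1, rule_format])
  then obtain A B where "openin T A" "openin T B" "a \<in> A" "b \<in> B" "A \<times> B \<subseteq> P"
    by blast
  then show ?thesis unfolding P_def by blast
qed

lemma csub: "continuous_map (prod_topology T T) T (\<lambda>(x,y). vsub x y)"
proof -
  have "continuous_map (prod_topology T T) T (\<lambda>z. vsub (fst z) (snd z))"
    by (intro cont_sub2 continuous_map_fst continuous_map_snd)
  then show ?thesis by (simp add: case_prod_unfold)
qed

lemma nbhd_add:
  assumes "openin T U" "zv \<in> U"
  shows "\<exists>W. openin T W \<and> zv \<in> W \<and> (\<forall>a\<in>W. \<forall>b\<in>W. vadd a b \<in> U)"
proof -
  have "vadd zv zv = zv" by (simp add: valg)
  then obtain A B where "openin T A" "openin T B" "zv \<in> A" "zv \<in> B" "\<forall>x\<in>A. \<forall>y\<in>B. vadd x y \<in> U"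
    using nbhd_binop[OF cadd assms(1), of zv zv] assms by auto
  then show ?thesis by (intro exI[of _ "A \<inter> B"]) auto
qed

lemma nbhd_sub:
  assumes "openin T U" "zv \<in> U"
  shows "\<exists>W. openin T W \<and> zv \<in> W \<and> (\<forall>a\<in>W. \<forall>b\<in>W. vsub a b \<in> U)"
proof -
  have "vsub zv zv = zv" by (simp add: valg)
  then obtain A B where "openin T A" "openin T B" "zv \<in> A" "zv \<in> B" "\<forall>x\<in>A. \<forall>y\<in>B. vsub x y \<in> U"
    using nbhd_binop[OF csub assms(1), of zv zv] assms by auto
  then show ?thesis by (intro exI[of _ "A \<inter> B"]) auto
qed

lemma open_subset: "openin T U \<Longrightarrow> U \<subseteq> X"
  using openin_subset by fastforce

lemma small_scalar:
  assumes U: "openin T U" "zv \<in> U" and y: "y \<in> X"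
  shows "\<exists>e>0. \<forall>c. cmod c < e \<longrightarrow> vsc c y \<in> U"
proof -
  have "continuous_map euclidean T (\<lambda>c. vsc c y)"
    by (intro cont_sc2 continuous_map_id[unfolded id_def] cont_const y)
  then have "open {c. vsc c y \<in> U}"
    using openin_continuous_map_preimage[OF _ U(1)] by fastforce
  moreover have "0 \<in> {c. vsc c y \<in> U}" using U by (simp add: vsc_def zv_def[symmetric])
  ultimately obtain e where "e > 0" "ball 0 e \<subseteq> {c. vsc c y \<in> U}"
    by (meson open_contains_ball)
  then show ?thesis by (intro exI[of _ e]) (auto simp: dist_norm)
qed

lemma absorb:
  assumes U: "openin T U" "zv \<in> U" and y: "y \<in> X"
  shows "\<exists>n::nat. vsc (1 / of_nat (Suc n)) y \<in> U"
proof -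
  obtain e where e: "e > 0" "\<And>c. cmod c < e \<Longrightarrow> vsc c y \<in> U"
    using small_scalar[OF assms] by blast
  obtain n::nat where "1 / real (Suc n) < e"
    using e(1) by (metis nat_approx_posE)
  moreover have "cmod (1 / of_nat (Suc n)) = 1 / real (Suc n)"
    by (simp only: norm_divide norm_one norm_of_nat)
  ultimately have "cmod (1 / of_nat (Suc n)) < e" by simp
  then show ?thesis using e by blast
qed

end


lemma vsub_zero[simp]: "vsub x zv = x" and vsub_self[simp]: "vsub x x = zv"
  and vadd_zero[simp]: "vadd x zv = x" and vadd_zero_left[simp]: "vadd zv x = x"
  by (simp_all add: valg)

context tvs
begin

lemma cont_tr: "a \<in> X \<Longrightarrow> continuous_map T T (\<lambda>x. vadd a x)"
  by (intro cont_add2 cont_const cont_id)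
lemma cont_trs: "a \<in> X \<Longrightarrow> continuous_map T T (\<lambda>x. vsub x a)"
  by (intro cont_sub2 cont_const cont_id)
lemma cont_trs2: "a \<in> X \<Longrightarrow> continuous_map T T (\<lambda>x. vsub a x)"
  by (intro cont_sub2 cont_const cont_id)

lemma klee:
  assumes cm: "completely_metrizable_space T"
    and sX: "\<And>n. s n \<in> X"
    and cau: "\<And>U. openin T U \<Longrightarrow> zv \<in> U \<Longrightarrow> (\<exists>M. \<forall>m\<ge>M. \<forall>n\<ge>m. vsub (s n) (s m) \<in> U)"
  shows "\<exists>z\<in>X. limitin T s z sequentially"
proof -
  obtain M d where Md: "Metric_space M d" "Metric_space.mcomplete M d" "T = Metric_space.mtopology M d"
    using cm unfolding completely_metrizable_space_def by blast
  interpret Metric_space M d by (rule Md(1))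
  have MX: "M = X" using Md(3) topX by (metis topspace_mtopology)
  define D where "D k = {x\<in>X. \<exists>Q V N. openin T Q \<and> (\<forall>a\<in>Q. \<forall>b\<in>Q. d a b \<le> 1/Suc k) \<and>
        openin T V \<and> zv \<in> V \<and> (\<forall>n\<ge>N. \<forall>v\<in>V. vadd (vadd x (s n)) v \<in> Q)}" for k :: nat
  have opD: "openin T (D k)" for k
  proof (subst openin_subopen, intro ballI)
    fix x assume "x \<in> D k"
    then obtain Q V N where x: "x \<in> X" "openin T Q" "\<forall>a\<in>Q. \<forall>b\<in>Q. d a b \<le> 1/Suc k"
      "openin T V" "zv \<in> V" "\<forall>n\<ge>N. \<forall>v\<in>V. vadd (vadd x (s n)) v \<in> Q"
      unfolding D_def by blast
    obtain V' where V': "openin T V'" "zv \<in> V'" "\<forall>a\<in>V'. \<forall>b\<in>V'. vadd a b \<in> V"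
      using nbhd_add[OF x(4,5)] by blast
    define Ob' where "Ob' = {x'\<in>X. vsub x' x \<in> V'}"
    have "openin T Ob'" unfolding Ob'_def by (rule open_pre[OF cont_trs[OF x(1)] V'(1)])
    moreover have "x \<in> Ob'" using x(1) V'(2) by (simp add: Ob'_def)
    moreover have "Ob' \<subseteq> D k"
    proof
      fix x' assume x': "x' \<in> Ob'"
      have "\<forall>n\<ge>N. \<forall>v\<in>V'. vadd (vadd x' (s n)) v \<in> Q"
      proof (intro allI impI ballI)
        fix n v assume "N \<le> n" "v \<in> V'"
        have "vadd (vsub x' x) v \<in> V" using V'(3) x' \<open>v \<in> V'\<close> by (simp add: Ob'_def)
        then have "vadd (vadd x (s n)) (vadd (vsub x' x) v) \<in> Q" using x(6) \<open>N \<le> n\<close> by blast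
        moreover have "vadd (vadd x (s n)) (vadd (vsub x' x) v) = vadd (vadd x' (s n)) v"
          by (simp add: valg fun_eq_iff algebra_simps)
        ultimately show "vadd (vadd x' (s n)) v \<in> Q" by simp
      qed
      then show "x' \<in> D k" using x' x V' unfolding D_def Ob'_def by blast
    qed
    ultimately show "\<exists>T'. openin T T' \<and> x \<in> T' \<and> T' \<subseteq> D k" by blast
  qed
  have dD: "T closure_of (D k) = X" for k
  proof -
    have "D k \<inter> Ob \<noteq> {}" if Ob: "openin T Ob" "Ob \<noteq> {}" for Ob
    proof -
      obtain x0 where x0: "x0 \<in> Ob" using Ob by blast
      have x0X: "x0 \<in> X" using x0 open_subset[OF Ob(1)] by blast
      define W where "W = {w\<in>X. vsub x0 w \<in> Ob}"
      have oW: "openin T W" unfolding W_def by (rule open_pre[OF cont_trs2[OF x0X] Ob(1)])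
      have zW: "zv \<in> W" using x0 by (simp add: W_def)
      obtain N1 where N1: "\<forall>m\<ge>N1. \<forall>n\<ge>m. vsub (s n) (s m) \<in> W" using cau[OF oW zW] by blast
      define p where "p = vadd x0 (s N1)"
      have pX: "p \<in> X" using x0X sX by (simp add: p_def)
      define r where "r = 1 / (2 * real (Suc k))"
      have r: "r > 0" by (simp add: r_def)
      define Q where "Q = mball p r"
      have oQ: "openin T Q" by (simp add: Q_def Md(3))
      have dQ: "\<forall>a\<in>Q. \<forall>b\<in>Q. d a b \<le> 1/Suc k"
      proof (intro ballI)
        fix a b assume "a \<in> Q" "b \<in> Q"
        then have "d a p < r" "d p b < r" "a \<in> M" "b \<in> M" "p \<in> M" by (auto simp: Q_def commute)
        then have "d a b < 2 * r" using triangle[of a p b] by linarith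
        moreover have "2 * r = 1 / real (Suc k)" by (simp add: r_def divide_simps)
        ultimately show "d a b \<le> 1/Suc k" by linarith
      qed
      define Q' where "Q' = {y\<in>X. vadd p y \<in> Q}"
      have oQ': "openin T Q'" unfolding Q'_def by (rule open_pre[OF cont_tr[OF pX] oQ])
      have pQ: "p \<in> Q" unfolding Q_def using pX r MX centre_in_mball_iff by blast
      have zQ': "zv \<in> Q'" unfolding Q'_def using pQ by simp
      obtain V where V: "openin T V" "zv \<in> V" "\<forall>a\<in>V. \<forall>b\<in>V. vadd a b \<in> Q'"
        using nbhd_add[OF oQ' zQ'] by blast
      obtain M0 where M0: "\<forall>m\<ge>M0. \<forall>n\<ge>m. vsub (s n) (s m) \<in> V" using cau[OF V(1,2)] by blast
      define Mx where "Mx = max M0 N1"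
      define x where "x = vsub x0 (vsub (s Mx) (s N1))"
      have "vsub (s Mx) (s N1) \<in> W" using N1 by (simp add: Mx_def)
      then have xO: "x \<in> Ob" by (simp add: W_def x_def)
      have xX: "x \<in> X" using x0X sX by (simp add: x_def)
      have "\<forall>n\<ge>Mx. \<forall>v\<in>V. vadd (vadd x (s n)) v \<in> Q"
      proof (intro allI impI ballI)
        fix n v assume "Mx \<le> n" "v \<in> V"
        then have "vsub (s n) (s Mx) \<in> V" using M0 by (simp add: Mx_def)
        then have "vadd (vsub (s n) (s Mx)) v \<in> Q'" using V(3) \<open>v \<in> V\<close> by blast
        then have "vadd p (vadd (vsub (s n) (s Mx)) v) \<in> Q" by (simp add: Q'_def)
        moreover have "vadd p (vadd (vsub (s n) (s Mx)) v) = vadd (vadd x (s n)) v"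
          by (simp add: p_def x_def valg fun_eq_iff algebra_simps)
        ultimately show "vadd (vadd x (s n)) v \<in> Q" by simp
      qed
      then have "x \<in> D k" unfolding D_def using xX oQ dQ V by blast
      then show ?thesis using xO by blast
    qed
    then show ?thesis using dense_intersects_open[of T "D k"] topX by blast
  qed
  have "T closure_of \<Inter>(range D) = topspace T"
    by (rule Baire_category) (use cm opD dD in auto)
  then have "\<Inter>(range D) \<noteq> {}" using zero_in by fastforce
  then obtain x where x: "\<And>k. x \<in> D k" by blast
  have xX: "x \<in> X" using x[of 0] by (simp add: D_def)
  define t where "t n = vadd x (s n)" for n
  have "MCauchy t"
    unfolding MCauchy_def
  proof (intro conjI allI impI)
    show "range t \<subseteq> M" using MX xX sX by (auto simp: t_def)
    fix e :: real assume "e > 0"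
    then obtain k where k: "1 / real (Suc k) < e" by (metis nat_approx_posE)
    obtain Q V N where Q: "\<forall>a\<in>Q. \<forall>b\<in>Q. d a b \<le> 1/Suc k" "zv \<in> V"
      "\<forall>n\<ge>N. \<forall>v\<in>V. vadd (vadd x (s n)) v \<in> Q"
      using x[of k] unfolding D_def by blast
    have "t n \<in> Q" if "n \<ge> N" for n
    proof -
      have "vadd (vadd x (s n)) zv \<in> Q" using Q that by blast
      then show ?thesis by (simp add: t_def)
    qed
    then show "\<exists>N. \<forall>n n'. N \<le> n \<longrightarrow> N \<le> n' \<longrightarrow> d (t n) (t n') < e"
      using Q(1) k by (intro exI[of _ N]) (smt (verit))
  qed
  then obtain y where y: "limitin T t y sequentially"
    using Md(2) Md(3) unfolding mcomplete_def by blast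
  have yX: "y \<in> X" using y limitin_topspace by fastforce
  have "limitin T ((\<lambda>z. vsub z x) \<circ> t) (vsub y x) sequentially"
    by (rule continuous_map_limit[OF cont_trs[OF xX] y])
  moreover have "(\<lambda>z. vsub z x) \<circ> t = s" by (simp add: t_def valg fun_eq_iff)
  ultimately show ?thesis using xX yX by (intro bexI[of _ "vsub y x"]) auto
qed

end


lemma vsc_vsc[simp]: "vsc a (vsc b y) = vsc (a*b) y" by (simp add: valg mult.assoc)
lemma vsc_one[simp]: "vsc 1 y = y" by (simp add: valg)

context tvs
begin

lemma nbhd_base:
  assumes cm: "completely_metrizable_space T"
  shows "\<exists>B::nat \<Rightarrow> seq set. (\<forall>n. openin T (B n) \<and> zv \<in> B n) \<and>
     (\<forall>U. openin T U \<longrightarrow> zv \<in> U \<longrightarrow> (\<exists>n. \<forall>m\<ge>n. B m \<subseteq> U))"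
proof -
  obtain M d where Md: "Metric_space M d" "T = Metric_space.mtopology M d"
    using cm unfolding completely_metrizable_space_def by blast
  interpret Metric_space M d by (rule Md(1))
  have MX: "M = X" using Md(2) topX by (metis topspace_mtopology)
  define B where "B n = mball zv (1 / real (Suc n))" for n
  have zM: "zv \<in> M" using MX by simp
  have h1: "openin T (B n) \<and> zv \<in> B n" for n
    using zM by (simp add: B_def Md(2))
  have h2: "\<exists>n. \<forall>m\<ge>n. B m \<subseteq> U" if U: "openin T U" "zv \<in> U" for U
  proof -
    have "openin mtopology U" using U(1) Md(2) by simp
    then obtain r where r: "r > 0" "mball zv r \<subseteq> U" using U(2) openin_mtopology by blast
    obtain n where n: "1 / real (Suc n) < r" using r(1) by (metis nat_approx_posE)
    have "B m \<subseteq> U" if "m \<ge> n" for m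
    proof -
      have "1 / real (Suc m) \<le> 1 / real (Suc n)" using that by (simp add: frac_le)
      then have "B m \<subseteq> mball zv r" unfolding B_def using n by (intro mball_subset_concentric) simp
      then show ?thesis using r by blast
    qed
    then show ?thesis by blast
  qed
  have "\<forall>n. openin T (B n) \<and> zv \<in> B n" using h1 by simp
  moreover have "\<forall>U. openin T U \<longrightarrow> zv \<in> U \<longrightarrow> (\<exists>n. \<forall>m\<ge>n. B m \<subseteq> U)"
    by (intro allI impI h2)
  ultimately show ?thesis by (intro exI[where x=B] conjI)
qed

lemma cont_scc: "continuous_map T T (\<lambda>x. vsc c x)"
  by (intro cont_sc2 cont_id) simp

end

lemma almost_cont:
  assumes tY: "tvs Y S" and tX: "tvs X T" and cmY: "completely_metrizable_space S"
    and YX: "Y \<subseteq> X" and W: "openin T W" "zv \<in> W"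
  shows "\<exists>V. openin S V \<and> zv \<in> V \<and> V \<subseteq> S closure_of (W \<inter> Y)"
proof -
  interpret Y: tvs Y S by (rule tY)
  interpret X: tvs X T by (rule tX)
  obtain W2 where W2: "openin T W2" "zv \<in> W2" "\<forall>a\<in>W2. \<forall>b\<in>W2. vsub a b \<in> W"
    using X.nbhd_sub[OF W] by blast
  define A where "A n = S closure_of ((\<lambda>y. vsc (of_nat (Suc n)) y) ` (W2 \<inter> Y))" for n
  have "\<exists>n. S interior_of (A n) \<noteq> {}"
  proof (rule ccontr)
    assume "\<not> ?thesis"
    then have "S interior_of \<Union>(range A) = {}"
      by (intro Baire_category_alt) (auto simp: cmY A_def)
    moreover have "\<Union>(range A) = Y"
    proof
      show "\<Union>(range A) \<subseteq> Y" unfolding A_def using closure_of_subset_topspace[of S] by (simp add: UN_subset_iff)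
      show "Y \<subseteq> \<Union>(range A)"
      proof
        fix y assume y: "y \<in> Y"
        then obtain n where n: "vsc (1 / of_nat (Suc n)) y \<in> W2" using X.absorb[OF W2(1,2)] YX by blast
        have "y = vsc (of_nat (Suc n)) (vsc (1 / of_nat (Suc n)) y)"
          by (simp del: of_nat_Suc)
        then have "y \<in> (\<lambda>y. vsc (of_nat (Suc n)) y) ` (W2 \<inter> Y)"
          by (rule image_eqI[where x="vsc (1 / of_nat (Suc n)) y"]) (use n y in simp)
        moreover have "(\<lambda>y. vsc (of_nat (Suc n)) y) ` (W2 \<inter> Y) \<subseteq> topspace S" by auto
        ultimately have "y \<in> A n" unfolding A_def using closure_of_subset by blast
        then show "y \<in> \<Union>(range A)" by blast
      qed
    qed
    ultimately show False by (metis Y.topX interior_of_topspace Y.zero_in empty_iff)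
  qed
  then obtain n y0 where y0: "y0 \<in> S interior_of (A n)" by blast
  define c :: complex where "c = of_nat (Suc n)"
  have c0: "c \<noteq> 0" by (simp add: c_def del: of_nat_Suc)
  define G where "G = S interior_of (A n)"
  define G' where "G' = {y\<in>Y. vsc c y \<in> G}"
  have oG': "openin S G'" unfolding G'_def by (rule Y.open_pre[OF Y.cont_scc]) (simp add: G_def)
  have y0Y: "y0 \<in> Y" using interior_of_subset_topspace[of S "A n"] y0 by auto
  define y1 where "y1 = vsc (1/c) y0"
  have y1G': "y1 \<in> G'" using y0 y0Y c0 by (simp add: G'_def y1_def G_def)
  have G'cl: "G' \<subseteq> S closure_of (W2 \<inter> Y)"
  proof
    fix y assume y: "y \<in> G'"
    then have "vsc c y \<in> A n" using interior_of_subset[of S "A n"] by (auto simp: G'_def G_def)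
    then have "vsc (1/c) (vsc c y) \<in> (\<lambda>y. vsc (1/c) y) ` A n" by blast
    also have "\<dots> \<subseteq> S closure_of ((\<lambda>y. vsc (1/c) y) ` ((\<lambda>y. vsc c y) ` (W2 \<inter> Y)))"
      unfolding A_def c_def[symmetric] by (rule continuous_map_image_closure_subset[OF Y.cont_scc])
    also have "(\<lambda>y. vsc (1/c) y) ` ((\<lambda>y. vsc c y) ` (W2 \<inter> Y)) = W2 \<inter> Y"
      using c0 by (simp add: image_image)
    finally show "y \<in> S closure_of (W2 \<inter> Y)" using c0 by simp
  qed
  define V where "V = {v\<in>Y. vadd y1 v \<in> G'}"
  have y1Y: "y1 \<in> Y" using y1G' by (simp add: G'_def)
  have oV: "openin S V" unfolding V_def by (rule Y.open_pre[OF Y.cont_tr[OF y1Y] oG'])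
  have zV: "zv \<in> V" using y1G' by (simp add: V_def)
  have "V \<subseteq> S closure_of (W \<inter> Y)"
  proof
    fix v assume v: "v \<in> V"
    define a where "a = vadd y1 v"
    have "a \<in> S closure_of (W2 \<inter> Y)" "y1 \<in> S closure_of (W2 \<inter> Y)"
      using v y1G' G'cl by (auto simp: V_def a_def)
    then have "(a, y1) \<in> prod_topology S S closure_of ((W2 \<inter> Y) \<times> (W2 \<inter> Y))"
      by (simp add: closure_of_Times)
    then have m1: "(\<lambda>(x,y). vsub x y) (a, y1) \<in> S closure_of ((\<lambda>(x,y). vsub x y) ` ((W2 \<inter> Y) \<times> (W2 \<inter> Y)))"
      using continuous_map_image_closure_subset[OF Y.csub] by blast
    have m2: "(\<lambda>(x,y). vsub x y) ` ((W2 \<inter> Y) \<times> (W2 \<inter> Y)) \<subseteq> W \<inter> Y"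
      using W2(3) by auto
    have "(\<lambda>(x,y). vsub x y) (a, y1) \<in> S closure_of (W \<inter> Y)"
      using closure_of_mono[OF m2] m1 by blast
    then have "vsub a y1 \<in> S closure_of (W \<inter> Y)" by simp
    moreover have "vsub a y1 = v" by (simp add: a_def valg fun_eq_iff)
    ultimately show "v \<in> S closure_of (W \<inter> Y)" by simp
  qed
  then show ?thesis using oV zV by blast
qed


lemma incl_nbhd:
  assumes tY: "tvs Y S" and tX: "tvs X T" and cmY: "completely_metrizable_space S"
    and cmX: "completely_metrizable_space T"
    and coY: "\<And>j. continuous_map S euclidean (\<lambda>x. x j)"
    and coX: "\<And>j. continuous_map T euclidean (\<lambda>x. x j)"
    and YX: "Y \<subseteq> X" and U: "openin T U" "zv \<in> U"
  shows "\<exists>V. openin S V \<and> zv \<in> V \<and> V \<subseteq> U"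
proof -
  interpret Y: tvs Y S by (rule tY)
  interpret X: tvs X T by (rule tX)
  obtain BT :: "nat \<Rightarrow> seq set" where BT: "\<And>n. openin T (BT n)" "\<And>n. zv \<in> BT n"
    "\<And>U. openin T U \<Longrightarrow> zv \<in> U \<Longrightarrow> \<exists>n. \<forall>m\<ge>n. BT m \<subseteq> U"
    using X.nbhd_base[OF cmX] by metis
  obtain BS :: "nat \<Rightarrow> seq set" where BS: "\<And>n. openin S (BS n)" "\<And>n. zv \<in> BS n"
    "\<And>U. openin S U \<Longrightarrow> zv \<in> U \<Longrightarrow> \<exists>n. \<forall>m\<ge>n. BS m \<subseteq> U"
    using Y.nbhd_base[OF cmY] by metis
  obtain W0 where W0: "openin T W0" "zv \<in> W0" "\<forall>a\<in>W0. \<forall>b\<in>W0. vadd a b \<in> U"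
    using X.nbhd_add[OF U] by blast
  define PW where "PW m A W' \<longleftrightarrow> openin T W' \<and> zv \<in> W' \<and> (\<forall>a\<in>W'. \<forall>b\<in>W'. vadd a b \<in> A) \<and> W' \<subseteq> BT m"
    for m A W'
  have exW: "\<exists>W'. PW m A W'" if A: "openin T A" "zv \<in> A" for m A
  proof -
    obtain W'' where "openin T W''" "zv \<in> W''" "\<forall>a\<in>W''. \<forall>b\<in>W''. vadd a b \<in> A"
      using X.nbhd_add[OF A] by blast
    then show ?thesis unfolding PW_def using BT(1,2)[of m]
      by (intro exI[where x="W'' \<inter> BT m"]) auto
  qed
  define W where "W = rec_nat W0 (\<lambda>m A. SOME W'. PW m A W')"
  have W_0: "W 0 = W0" and W_Suc: "W (Suc m) = (SOME W'. PW m (W m) W')" for m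
    by (simp_all add: W_def)
  have Wo: "openin T (W m) \<and> zv \<in> W m" for m
  proof (induction m)
    case 0 then show ?case using W0 W_0 by simp
  next
    case (Suc m)
    then have "PW m (W m) (W (Suc m))" unfolding W_Suc by (metis exW someI_ex)
    then show ?case by (simp add: PW_def)
  qed
  have WS: "PW m (W m) (W (Suc m))" for m
    unfolding W_Suc using Wo[of m] by (metis exW someI_ex)
  define PV where "PV m V \<longleftrightarrow> openin S V \<and> zv \<in> V \<and> V \<subseteq> S closure_of (W m \<inter> Y) \<and> V \<subseteq> BS m" for m V
  have exV: "\<exists>V. PV m V" for m
  proof -
    obtain V' where "openin S V'" "zv \<in> V'" "V' \<subseteq> S closure_of (W m \<inter> Y)"
      using almost_cont[OF tY tX cmY YX] Wo[of m] by blast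
    then show ?thesis unfolding PV_def using BS(1,2)[of m]
      by (intro exI[where x="V' \<inter> BS m"]) auto
  qed
  define V where "V m = (SOME V. PV m V)" for m
  have PVm: "PV m (V m)" for m unfolding V_def by (rule someI_ex[OF exV])
  have "V 1 \<subseteq> U"
  proof
    fix x assume x1: "x \<in> V 1"
    have xY: "x \<in> Y" using PVm[of 1] x1 unfolding PV_def using openin_subset Y.topX by blast
    define P where "P m sm s' \<longleftrightarrow> s' \<in> Y \<and> vsub s' sm \<in> W (Suc m) \<and> vsub x s' \<in> V (Suc (Suc m))"
      for m sm s'
    have exs: "\<exists>s'. P m sm s'" if sm: "sm \<in> Y" "vsub x sm \<in> V (Suc m)" for m sm
    proof -
      define z where "z = vsub x sm"
      have zY: "z \<in> Y" using xY sm by (simp add: z_def)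
      have zc: "z \<in> S closure_of (W (Suc m) \<inter> Y)" using sm PVm[of "Suc m"] by (auto simp: PV_def z_def)
      define Ob where "Ob = {a\<in>Y. vsub z a \<in> V (Suc (Suc m))}"
      have "openin S Ob" unfolding Ob_def
        by (rule Y.open_pre[OF Y.cont_trs2[OF zY]]) (use PVm in \<open>simp add: PV_def\<close>)
      moreover have "z \<in> Ob" using zY PVm[of "Suc (Suc m)"] by (simp add: Ob_def PV_def)
      ultimately obtain a where a: "a \<in> W (Suc m) \<inter> Y" "a \<in> Ob"
        using zc unfolding in_closure_of by blast
      have "P m sm (vadd sm a)"
        unfolding P_def
      proof (intro conjI)
        show "vadd sm a \<in> Y" using a sm by simp
        have "vsub (vadd sm a) sm = a" by (simp add: valg fun_eq_iff)
        then show "vsub (vadd sm a) sm \<in> W (Suc m)" using a by simp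
        have "vsub x (vadd sm a) = vsub z a" by (simp add: z_def valg fun_eq_iff)
        then show "vsub x (vadd sm a) \<in> V (Suc (Suc m))" using a by (simp add: Ob_def)
      qed
      then show ?thesis by blast
    qed
    define s where "s = rec_nat zv (\<lambda>m sm. SOME s'. P m sm s')"
    have s_0: "s 0 = zv" and s_Suc: "s (Suc m) = (SOME s'. P m (s m) s')" for m
      by (simp_all add: s_def)
    have inv: "s m \<in> Y \<and> vsub x (s m) \<in> V (Suc m)" for m
    proof (induction m)
      case 0 then show ?case using x1 by (simp add: s_0)
    next
      case (Suc m)
      then have "P m (s m) (s (Suc m))" unfolding s_Suc using exs by (metis someI_ex)
      then show ?case by (simp add: P_def)
    qed
    have stepP: "P m (s m) (s (Suc m))" for m
      unfolding s_Suc using exs inv by (metis someI_ex)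
    have sums: "vsub (s (m + k)) (s m) \<in> W m" for k m
    proof (induction k arbitrary: m)
      case 0 then show ?case using Wo by simp
    next
      case (Suc k)
      have e: "vsub (s (m + Suc k)) (s m) = vadd (vsub (s (Suc m)) (s m)) (vsub (s (Suc m + k)) (s (Suc m)))"
        by (simp add: valg fun_eq_iff)
      have "vsub (s (Suc m)) (s m) \<in> W (Suc m)" using stepP[of m] by (simp add: P_def)
      moreover have "vsub (s (Suc m + k)) (s (Suc m)) \<in> W (Suc m)" using Suc.IH[of "Suc m"] by simp
      ultimately show ?case unfolding e using WS[of m] by (simp add: PW_def)
    qed
    have sY: "s n \<in> Y" for n using inv by simp
    have sX: "s n \<in> X" for n using sY YX by blast
    have cau: "\<exists>M. \<forall>m\<ge>M. \<forall>n\<ge>m. vsub (s n) (s m) \<in> U'" if U': "openin T U'" "zv \<in> U'" for U'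
    proof -
      obtain N where N: "\<forall>m\<ge>N. BT m \<subseteq> U'" using BT(3)[OF U'] by blast
      have "vsub (s n) (s m) \<in> U'" if mn: "m \<ge> Suc N" "n \<ge> m" for m n
      proof -
        obtain m' where m': "m = Suc m'" using mn by (cases m) auto
        have "vsub (s (m + (n - m))) (s m) \<in> W m" by (rule sums)
        then have "vsub (s n) (s m) \<in> W (Suc m')" using mn m' by simp
        also have "\<dots> \<subseteq> BT m'" using WS[of m'] by (simp add: PW_def)
        also have "\<dots> \<subseteq> U'" using N m' mn by simp
        finally show ?thesis .
      qed
      then show ?thesis by blast
    qed
    obtain z where zX: "z \<in> X" and zlim: "limitin T s z sequentially"
      using X.klee[OF cmX sX cau] by blast
    have elim: "limitin S (\<lambda>n. vsub x (s n)) zv sequentially"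
      unfolding limitin_def
    proof (intro conjI allI impI)
      show "zv \<in> topspace S" by simp
      fix U' assume U': "openin S U' \<and> zv \<in> U'"
      then obtain N where N: "\<forall>m\<ge>N. BS m \<subseteq> U'" using BS(3) by blast
      have "vsub x (s n) \<in> U'" if "n \<ge> N" for n
      proof -
        have "vsub x (s n) \<in> V (Suc n)" using inv by simp
        also have "\<dots> \<subseteq> BS (Suc n)" using PVm by (simp add: PV_def)
        also have "\<dots> \<subseteq> U'" using N that by simp
        finally show ?thesis .
      qed
      then show "\<forall>\<^sub>F n in sequentially. vsub x (s n) \<in> U'"
        using eventually_sequentially by blast
    qed
    have "limitin S ((\<lambda>w. vsub x w) \<circ> (\<lambda>n. vsub x (s n))) (vsub x zv) sequentially"
      by (rule continuous_map_limit[OF Y.cont_trs2[OF xY] elim])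
    moreover have "(\<lambda>w. vsub x w) \<circ> (\<lambda>n. vsub x (s n)) = s" by (simp add: valg fun_eq_iff)
    ultimately have slim: "limitin S s x sequentially" by simp
    have "z = x"
    proof
      fix j
      have "limitin euclidean ((\<lambda>w. w j) \<circ> s) (z j) sequentially"
        by (rule continuous_map_limit[OF coX zlim])
      moreover have "limitin euclidean ((\<lambda>w. w j) \<circ> s) (x j) sequentially"
        by (rule continuous_map_limit[OF coY slim])
      ultimately show "z j = x j" by (simp add: LIMSEQ_unique)
    qed
    have xX: "x \<in> X" using xY YX by blast
    have "limitin T ((\<lambda>w. vsub x w) \<circ> s) (vsub x z) sequentially"
      by (rule continuous_map_limit[OF X.cont_trs2[OF xX] zlim])
    then have "limitin T (\<lambda>n. vsub x (s n)) zv sequentially" using \<open>z = x\<close> by (simp add: o_def)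
    then have "\<forall>\<^sub>F n in sequentially. vsub x (s n) \<in> W0"
      using W0 unfolding limitin_def by blast
    then obtain N0 where "\<forall>n\<ge>N0. vsub x (s n) \<in> W0" unfolding eventually_sequentially by blast
    then obtain n where n: "vsub x (s n) \<in> W0" by blast
    have "vsub (s (0 + n)) (s 0) \<in> W 0" by (rule sums)
    then have "s n \<in> W0" by (simp add: s_0 W_0)
    then have "vadd (s n) (vsub x (s n)) \<in> U" using W0(3) n by blast
    moreover have "vadd (s n) (vsub x (s n)) = x" by (simp add: valg fun_eq_iff)
    ultimately show "x \<in> U" by simp
  qed
  then show ?thesis using PVm[of 1] unfolding PV_def by blast
qed

lemma incl_cont:
  assumes tY: "tvs Y S" and tX: "tvs X T" and cmY: "completely_metrizable_space S"
    and cmX: "completely_metrizable_space T"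
    and coY: "\<And>j. continuous_map S euclidean (\<lambda>x. x j)"
    and coX: "\<And>j. continuous_map T euclidean (\<lambda>x. x j)"
    and YX: "Y \<subseteq> X"
  shows "continuous_map S T (\<lambda>x. x)"
proof -
  interpret Y: tvs Y S by (rule tY)
  interpret X: tvs X T by (rule tX)
  have "openin S {x \<in> topspace S. x \<in> U}" if U: "openin T U" for U
  proof (subst openin_subopen, intro ballI)
    fix y assume y: "y \<in> {x \<in> topspace S. x \<in> U}"
    then have yY: "y \<in> Y" and yU: "y \<in> U" by auto
    have yX: "y \<in> X" using yY YX by blast
    define U' where "U' = {w\<in>X. vadd y w \<in> U}"
    have oU': "openin T U'" unfolding U'_def by (rule X.open_pre[OF X.cont_tr[OF yX] U])
    have zU': "zv \<in> U'" using yU by (simp add: U'_def)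
    obtain V where V: "openin S V" "zv \<in> V" "V \<subseteq> U'"
      using incl_nbhd[OF assms oU' zU'] by blast
    define N where "N = {v\<in>Y. vsub v y \<in> V}"
    have "openin S N" unfolding N_def by (rule Y.open_pre[OF Y.cont_trs[OF yY] V(1)])
    moreover have "y \<in> N" using yY V(2) by (simp add: N_def)
    moreover have "N \<subseteq> {x \<in> topspace S. x \<in> U}"
    proof
      fix v assume "v \<in> N"
      then have "v \<in> Y" "vadd y (vsub v y) \<in> U" using V(3) by (auto simp: N_def U'_def)
      moreover have "vadd y (vsub v y) = v" by (simp add: valg fun_eq_iff)
      ultimately show "v \<in> {x \<in> topspace S. x \<in> U}" by simp
    qed
    ultimately show "\<exists>T'. openin S T' \<and> y \<in> T' \<and> T' \<subseteq> {x \<in> topspace S. x \<in> U}" by blast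
  qed
  then show ?thesis unfolding continuous_map_def using YX by auto
qed


lemma HB_real:
  assumes lin: "linear_subspace X"
    and Ph: "linear_subspace P" "P \<subseteq> X"
    and u_add: "\<And>x y. x\<in>P \<Longrightarrow> y\<in>P \<Longrightarrow> u (vadd x y) = u x + u y"
    and u_sc: "\<And>r x. x\<in>P \<Longrightarrow> u (vsc (of_real r) x) = r * u x"
    and u_le: "\<And>x. x\<in>P \<Longrightarrow> u x \<le> p x"
    and p_add: "\<And>x y. x\<in>X \<Longrightarrow> y\<in>X \<Longrightarrow> p (vadd x y) \<le> p x + p y"
    and p_sc: "\<And>r x. r > 0 \<Longrightarrow> x\<in>X \<Longrightarrow> p (vsc (of_real r) x) = r * p x"
  shows "\<exists>U. (\<forall>x\<in>X. \<forall>y\<in>X. U (vadd x y) = U x + U y) \<and> (\<forall>r. \<forall>x\<in>X. U (vsc (of_real r) x) = r * U x)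
           \<and> (\<forall>x\<in>X. U x \<le> p x) \<and> (\<forall>x\<in>P. U x = u x)"
proof -
  have Xz: "zv \<in> X" and Xadd: "\<And>x y. x\<in>X \<Longrightarrow> y\<in>X \<Longrightarrow> vadd x y \<in> X"
    and Xsc: "\<And>c x. x\<in>X \<Longrightarrow> vsc c x \<in> X"
    using lin by (auto simp: linear_subspace_def valg)
  have Pz: "zv \<in> P" using Ph(1) by (simp add: linear_subspace_def zv_def)
  have Xsub: "\<And>x y. x\<in>X \<Longrightarrow> y\<in>X \<Longrightarrow> vsub x y \<in> X" by (simp add: vsub_eq Xadd Xsc)
  define G0 where "G0 = (\<lambda>x. (x, u x)) ` P"
  define ok where "ok G \<longleftrightarrow> G \<subseteq> X \<times> UNIV \<and> (\<forall>x a b. (x,a)\<in>G \<longrightarrow> (x,b)\<in>G \<longrightarrow> a = b)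
     \<and> (\<forall>x a. (x,a)\<in>G \<longrightarrow> a \<le> p x) \<and> (zv, 0) \<in> G
     \<and> (\<forall>x a y b. (x,a)\<in>G \<longrightarrow> (y,b)\<in>G \<longrightarrow> (vadd x y, a+b) \<in> G)
     \<and> (\<forall>x a r. (x,a)\<in>G \<longrightarrow> (vsc (of_real r) x, r*a) \<in> G) \<and> G0 \<subseteq> G" for G
  have uz: "u zv = 0"
  proof -
    have "u (vsc (of_real 0) zv) = 0 * u zv" using u_sc Pz by blast
    then show ?thesis by (simp add: valg)
  qed
  have okG0: "ok G0"
    unfolding ok_def G0_def
  proof (intro conjI allI impI)
    show "(\<lambda>x. (x, u x)) ` P \<subseteq> X \<times> UNIV" using Ph(2) by auto
    show "(zv, 0) \<in> (\<lambda>x. (x, u x)) ` P" using Pz uz by force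
  next
    fix x a y b assume "(x, a) \<in> (\<lambda>x. (x, u x)) ` P" "(y, b) \<in> (\<lambda>x. (x, u x)) ` P"
    moreover have "vadd x y \<in> P" if "x \<in> P" "y \<in> P" using that Ph(1) by (simp add: linear_subspace_def vadd_def)
    ultimately show "(vadd x y, a + b) \<in> (\<lambda>x. (x, u x)) ` P" using u_add by force
  next
    fix x a r assume "(x, a) \<in> (\<lambda>x. (x, u x)) ` P"
    moreover have "vsc c x \<in> P" if "x \<in> P" for c using that Ph(1) by (simp add: linear_subspace_def vsc_def)
    ultimately show "(vsc (complex_of_real r) x, r * a) \<in> (\<lambda>x. (x, u x)) ` P" using u_sc by force
  qed (use u_le in auto)
  have "\<exists>U\<in>{G. ok G}. \<forall>G\<in>C. G \<subseteq> U" if C: "C \<in> chains {G. ok G}" for C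
  proof (cases "C = {}")
    case True then show ?thesis using okG0 by blast
  next
    case False
    have Cok: "\<And>G. G \<in> C \<Longrightarrow> ok G" and Cch: "\<And>G H. G \<in> C \<Longrightarrow> H \<in> C \<Longrightarrow> G \<subseteq> H \<or> H \<subseteq> G"
      using C unfolding chains_def chain_subset_def by auto
    obtain G1 where G1: "G1 \<in> C" using False by blast
    have two: "\<exists>G\<in>C. (x,a) \<in> G \<and> (y,b) \<in> G" if xy: "(x,a) \<in> \<Union>C" "(y,b) \<in> \<Union>C" for x a y b
    proof -
      obtain G H where GH: "G \<in> C" "(x,a) \<in> G" "H \<in> C" "(y,b) \<in> H" using xy by blast
      show ?thesis using Cch[OF GH(1,3)]
      proof
        assume "G \<subseteq> H" then show ?thesis using GH by blast
      next
        assume "H \<subseteq> G" then show ?thesis using GH by blast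
      qed
    qed
    have "ok (\<Union>C)"
      unfolding ok_def
    proof (intro conjI allI impI)
      show "\<Union>C \<subseteq> X \<times> UNIV" using Cok unfolding ok_def by blast
      show "(zv, 0) \<in> \<Union>C" using Cok[OF G1] G1 unfolding ok_def by blast
      show "G0 \<subseteq> \<Union>C" using Cok[OF G1] G1 unfolding ok_def by blast
    next
      fix x a b assume "(x, a) \<in> \<Union>C" "(x, b) \<in> \<Union>C"
      then obtain G where "G \<in> C" "(x,a) \<in> G" "(x,b) \<in> G" using two by blast
      then show "a = b" using Cok unfolding ok_def by blast
    next
      fix x a assume "(x, a) \<in> \<Union>C"
      then show "a \<le> p x" using Cok unfolding ok_def by blast
    next
      fix x a y b assume "(x, a) \<in> \<Union>C" "(y, b) \<in> \<Union>C"
      then obtain G where "G \<in> C" "(x,a) \<in> G" "(y,b) \<in> G" using two by blast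
      then show "(vadd x y, a + b) \<in> \<Union>C" using Cok unfolding ok_def by blast
    next
      fix x a r assume "(x, a) \<in> \<Union>C"
      then obtain G where "G \<in> C" "(x,a) \<in> G" by blast
      then show "(vsc (complex_of_real r) x, r * a) \<in> \<Union>C" using Cok unfolding ok_def by blast
    qed
    then show ?thesis by blast
  qed
  then obtain M where okM: "ok M" and maxM: "\<And>G. ok G \<Longrightarrow> M \<subseteq> G \<Longrightarrow> G = M"
    using Zorn_Lemma2[of "{G. ok G}"] by auto
  have MX: "\<And>x a. (x,a) \<in> M \<Longrightarrow> x \<in> X" using okM unfolding ok_def by blast
  have Mfun: "\<And>x a b. (x,a) \<in> M \<Longrightarrow> (x,b) \<in> M \<Longrightarrow> a = b" using okM unfolding ok_def by blast
  have Mp: "\<And>x a. (x,a) \<in> M \<Longrightarrow> a \<le> p x" using okM unfolding ok_def by blast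
  have Mz: "(zv, 0) \<in> M" using okM unfolding ok_def by blast
  have Madd: "\<And>x a y b. (x,a)\<in>M \<Longrightarrow> (y,b)\<in>M \<Longrightarrow> (vadd x y, a+b) \<in> M" using okM unfolding ok_def by blast
  have Msc: "\<And>x a r. (x,a)\<in>M \<Longrightarrow> (vsc (of_real r) x, r*a) \<in> M" using okM unfolding ok_def by blast
  have MG0: "G0 \<subseteq> M" using okM unfolding ok_def by blast
  have dom: "\<exists>a. (x0,a) \<in> M" if x0X: "x0 \<in> X" for x0
  proof (rule ccontr)
    assume nx: "\<not> (\<exists>a. (x0,a) \<in> M)"
    define L where "L = {a - p (vsub y x0) | y a. (y,a) \<in> M}"
    have bound: "a - p (vsub y x0) \<le> p (vadd z x0) - b" if "(y,a)\<in>M" "(z,b)\<in>M" for y a z b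
    proof -
      have yz: "y \<in> X" "z \<in> X" using that MX by auto
      have "a + b \<le> p (vadd y z)" using Madd[OF that] Mp by blast
      also have "vadd y z = vadd (vsub y x0) (vadd z x0)" by (simp add: valg fun_eq_iff)
      also have "p \<dots> \<le> p (vsub y x0) + p (vadd z x0)" by (intro p_add Xsub Xadd yz x0X)
      finally show ?thesis by simp
    qed
    define c where "c = Sup L"
    have Lne: "L \<noteq> {}" using Mz unfolding L_def by blast
    have Lbdd: "bdd_above L" unfolding bdd_above_def L_def using bound[OF _ Mz] by blast
    have cL: "a - p (vsub y x0) \<le> c" if "(y,a)\<in>M" for y a
      unfolding c_def using Lbdd that by (intro cSup_upper) (auto simp: L_def)
    have cU: "c \<le> p (vadd z x0) - b" if "(z,b)\<in>M" for z b
      unfolding c_def using Lne that bound by (intro cSup_least) (auto simp: L_def)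
    define M' where "M' = {(vadd y (vsc (of_real r) x0), a + r*c) | y a r. (y,a) \<in> M}"
    have subM': "M \<subseteq> M'"
    proof
      fix z assume "z \<in> M"
      then obtain y a where "z = (y,a)" "(y,a) \<in> M" by (cases z) auto
      moreover have "vadd y (vsc (of_real 0) x0) = y" by (simp add: valg)
      ultimately show "z \<in> M'" unfolding M'_def by (metis (mono_tags, lifting) mem_Collect_eq mult_zero_left add_0_right)
    qed
    have x0M': "(x0, c) \<in> M'"
    proof -
      have "vadd zv (vsc (of_real 1) x0) = x0" by (simp add: valg)
      then show ?thesis unfolding M'_def using Mz by (metis (mono_tags, lifting) mem_Collect_eq mult_1 add_0)
    qed
    have "ok M'"
      unfolding ok_def
    proof (intro conjI allI impI)
      show "M' \<subseteq> X \<times> UNIV" unfolding M'_def using MX x0X Xadd Xsc by auto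
      show "(zv, 0) \<in> M'" using subM' Mz by blast
      show "G0 \<subseteq> M'" using subM' MG0 by blast
    next
      fix x a b assume xa: "(x, a) \<in> M'" and xb: "(x, b) \<in> M'"
      from xa obtain y1 a1 r1 where 1: "x = vadd y1 (vsc (of_real r1) x0)" "a = a1 + r1*c" "(y1,a1) \<in> M"
        unfolding M'_def by blast
      from xb obtain y2 a2 r2 where 2: "x = vadd y2 (vsc (of_real r2) x0)" "b = a2 + r2*c" "(y2,a2) \<in> M"
        unfolding M'_def by blast
      have E: "vadd y1 (vsc (of_real r1) x0) = vadd y2 (vsc (of_real r2) x0)" using 1 2 by simp
      have r: "r1 = r2"
      proof (rule ccontr)
        assume ne: "r1 \<noteq> r2"
        have "(vsc (of_real (-1)) y1, (-1)*a1) \<in> M" using Msc 1(3) by blast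
        then have "(vadd y2 (vsc (of_real (-1)) y1), a2 + (-1)*a1) \<in> M" using Madd 2(3) by blast
        then have "(vsc (of_real (1/(r1-r2))) (vadd y2 (vsc (of_real (-1)) y1)), (1/(r1-r2)) * (a2 + (-1)*a1)) \<in> M"
          using Msc by blast
        moreover have "vsc (of_real (1/(r1-r2))) (vadd y2 (vsc (of_real (-1)) y1)) = x0"
        proof
          fix i
          have "y1 i + of_real r1 * x0 i = y2 i + of_real r2 * x0 i"
            using fun_cong[OF E, of i] by (simp add: valg)
          moreover have "complex_of_real r1 - of_real r2 \<noteq> 0" using ne by simp
          ultimately show "vsc (of_real (1/(r1-r2))) (vadd y2 (vsc (of_real (-1)) y1)) i = x0 i"
            by (simp add: valg field_simps)
        qed
        ultimately show False using nx by metis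
      qed
      have "y1 = y2"
      proof
        fix i show "y1 i = y2 i" using fun_cong[OF E, of i] r by (simp add: valg)
      qed
      then show "a = b" using 1 2 r Mfun by blast
    next
      fix x a assume "(x, a) \<in> M'"
      then obtain y a1 r where 1: "x = vadd y (vsc (of_real r) x0)" "a = a1 + r*c" "(y,a1) \<in> M"
        unfolding M'_def by blast
      have yX: "y \<in> X" using MX 1(3) by blast
      consider "r = 0" | "r > 0" | "r < 0" by linarith
      then show "a \<le> p x"
      proof cases
        case 1
        then show ?thesis using \<open>x = _\<close> \<open>a = _\<close> Mp[OF \<open>(y,a1)\<in>M\<close>] by (simp add: valg)
      next
        case 2
        define y' where "y' = vsc (of_real (1/r)) y"
        have "(y', (1/r)*a1) \<in> M" unfolding y'_def using Msc 1(3) by blast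
        then have "c \<le> p (vadd y' x0) - (1/r)*a1" by (rule cU)
        then have "r * c \<le> r * p (vadd y' x0) - a1" using 2 by (simp add: field_simps)
        also have "r * p (vadd y' x0) = p (vsc (of_real r) (vadd y' x0))"
          using p_sc[OF 2] Xadd Xsc yX x0X by (simp add: y'_def)
        also have "vsc (of_real r) (vadd y' x0) = x"
          using 2 by (simp add: 1(1) y'_def valg fun_eq_iff field_simps)
        finally show ?thesis using 1(2) by simp
      next
        case 3
        define s where "s = -r"
        have s: "s > 0" using 3 by (simp add: s_def)
        define y' where "y' = vsc (of_real (1/s)) y"
        have "(y', (1/s)*a1) \<in> M" unfolding y'_def using Msc 1(3) by blast
        then have "(1/s)*a1 - p (vsub y' x0) \<le> c" by (rule cL)
        then have "a1 - s * p (vsub y' x0) \<le> s * c" using s by (simp add: field_simps)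
        moreover have "s * p (vsub y' x0) = p (vsc (of_real s) (vsub y' x0))"
          using p_sc[OF s] Xsub Xsc yX x0X by (simp add: y'_def)
        moreover have "vsc (of_real s) (vsub y' x0) = x"
          using s by (simp add: 1(1) s_def y'_def valg fun_eq_iff field_simps)
        ultimately show ?thesis using 1(2) by (simp add: s_def)
      qed
    next
      fix x a y b assume "(x, a) \<in> M'" "(y, b) \<in> M'"
      then obtain y1 a1 r1 y2 a2 r2 where 1: "x = vadd y1 (vsc (of_real r1) x0)" "a = a1 + r1*c" "(y1,a1) \<in> M"
        and 2: "y = vadd y2 (vsc (of_real r2) x0)" "b = a2 + r2*c" "(y2,a2) \<in> M"
        unfolding M'_def by blast
      have "(vadd y1 y2, a1 + a2) \<in> M" using Madd 1(3) 2(3) by blast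
      moreover have "vadd x y = vadd (vadd y1 y2) (vsc (of_real (r1 + r2)) x0)"
        by (simp add: 1 2 valg fun_eq_iff algebra_simps)
      moreover have "a + b = (a1 + a2) + (r1 + r2) * c" by (simp add: 1 2 algebra_simps)
      ultimately show "(vadd x y, a + b) \<in> M'" unfolding M'_def by blast
    next
      fix x a t assume "(x, a) \<in> M'"
      then obtain y1 a1 r1 where 1: "x = vadd y1 (vsc (of_real r1) x0)" "a = a1 + r1*c" "(y1,a1) \<in> M"
        unfolding M'_def by blast
      have "(vsc (of_real t) y1, t * a1) \<in> M" using Msc 1(3) by blast
      moreover have "vsc (of_real t) x = vadd (vsc (of_real t) y1) (vsc (of_real (t * r1)) x0)"
        by (simp add: 1 valg fun_eq_iff algebra_simps)
      moreover have "t * a = t * a1 + (t * r1) * c" by (simp add: 1 algebra_simps)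
      ultimately show "(vsc (of_real t) x, t * a) \<in> M'" unfolding M'_def by blast
    qed
    then have "M' = M" using maxM subM' by blast
    then show False using x0M' nx by blast
  qed
  define U where "U x = (THE a. (x,a) \<in> M)" for x
  have UM: "(x, U x) \<in> M" if "x \<in> X" for x
    unfolding U_def using dom[OF that] Mfun by (metis theI)
  have Ueq: "U x = a" if "(x,a) \<in> M" for x a
    using UM[OF MX[OF that]] that Mfun by blast
  show ?thesis
  proof (intro exI[where x=U] conjI ballI allI)
    fix x y assume "x \<in> X" "y \<in> X"
    then show "U (vadd x y) = U x + U y" using Ueq Madd UM by blast
  next
    fix r x assume "x \<in> X"
    then show "U (vsc (complex_of_real r) x) = r * U x" using Ueq Msc UM by blast
  next
    fix x assume "x \<in> X"
    then show "U x \<le> p x" using UM Mp by blast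
  next
    fix x assume "x \<in> P"
    then have "(x, u x) \<in> M" using MG0 unfolding G0_def by blast
    then show "U x = u x" by (rule Ueq)
  qed
qed


lemma vsc_zero[simp]: "vsc c zv = zv" by (simp add: valg)

context tvs
begin

lemma extend:
  assumes lc: "locally_convex T"
    and Ph: "linear_subspace P" "P \<subseteq> X"
    and gc: "continuous_map (subtopology T P) euclidean g"
    and g_add: "\<And>x y. x\<in>P \<Longrightarrow> y\<in>P \<Longrightarrow> g (vadd x y) = g x + g y"
    and g_sc: "\<And>c x. x\<in>P \<Longrightarrow> g (vsc c x) = c * g x"
  shows "\<exists>f. continuous_map T euclidean f \<and> (\<forall>x\<in>X. \<forall>y\<in>X. f (vadd x y) = f x + f y)
            \<and> (\<forall>c. \<forall>x\<in>X. f (vsc c x) = c * f x) \<and> (\<forall>x\<in>P. f x = g x)"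
proof -
  have Pz: "zv \<in> P" using Ph(1) by (simp add: linear_subspace_def zv_def)
  have Psc: "\<And>c x. x \<in> P \<Longrightarrow> vsc c x \<in> P" using Ph(1) by (simp add: linear_subspace_def vsc_def)
  have Padd: "\<And>x y. x \<in> P \<Longrightarrow> y \<in> P \<Longrightarrow> vadd x y \<in> P" using Ph(1) by (simp add: linear_subspace_def vadd_def)
  have gz: "g zv = 0" using g_sc[OF Pz, of 0] by (simp add: valg)
  have "openin (subtopology T P) {x \<in> topspace (subtopology T P). g x \<in> ball 0 1}"
    by (rule openin_continuous_map_preimage[OF gc]) simp
  then obtain Ob where Ob: "openin T Ob" "{x \<in> topspace (subtopology T P). g x \<in> ball 0 1} = Ob \<inter> P"
    unfolding openin_subtopology by blast
  have topP: "topspace (subtopology T P) = P" using Ph(2) by auto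
  have E: "{x\<in>P. g x \<in> ball 0 1} = Ob \<inter> P" using Ob(2) unfolding topP .
  have ObP: "cmod (g x) < 1" if "x \<in> Ob" "x \<in> P" for x
  proof -
    have "x \<in> {x\<in>P. g x \<in> ball 0 1}" unfolding E using that by blast
    then show ?thesis by (simp add: dist_norm)
  qed
  have "zv \<in> Ob \<inter> P" unfolding E[symmetric] using Pz gz by simp
  then have zOb: "zv \<in> Ob" by blast
  obtain V where V: "openin T V" "zv \<in> V" "V \<subseteq> Ob" "convex_seqset V"
    using lc Ob(1) zOb unfolding locally_convex_def zv_def by blast
  define C where "C = {x\<in>X. x \<in> V \<and> vsc (-1) x \<in> V}"
  have oC: "openin T C"
  proof -
    have "C = V \<inter> {x\<in>X. vsc (-1) x \<in> V}" using open_subset[OF V(1)] by (auto simp: C_def)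
    then show ?thesis using V(1) open_pre[OF cont_scc V(1)] by auto
  qed
  have zC: "zv \<in> C" using V(2) by (simp add: C_def)
  have CO: "C \<subseteq> Ob" using V(3) by (auto simp: C_def)
  have Csym: "\<And>x. x \<in> C \<Longrightarrow> vsc (-1) x \<in> C" by (auto simp: C_def)
  have CX: "C \<subseteq> X" by (auto simp: C_def)
  have Cconv: "vadd (vsc (of_real u) x) (vsc (of_real (1-u)) y) \<in> C"
    if "x \<in> C" "y \<in> C" "0 \<le> u" "u \<le> 1" for x y u
  proof -
    have conv: "vadd (vsc (of_real u) a) (vsc (of_real (1-u)) b) \<in> V" if "a \<in> V" "b \<in> V" for a b
    proof -
      have "(\<lambda>i. complex_of_real u * a i + complex_of_real (1 - u) * b i) \<in> V"
        using V(4) that \<open>0 \<le> u\<close> \<open>u \<le> 1\<close> unfolding convex_seqset_def by blast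
      then show ?thesis by (simp add: valg)
    qed
    have "vadd (vsc (of_real u) x) (vsc (of_real (1-u)) y) \<in> V"
      using conv that by (simp add: C_def)
    moreover have "vsc (-1) (vadd (vsc (of_real u) x) (vsc (of_real (1-u)) y)) =
        vadd (vsc (of_real u) (vsc (-1) x)) (vsc (of_real (1-u)) (vsc (-1) y))"
      by (simp add: valg fun_eq_iff algebra_simps)
    moreover have "vadd (vsc (of_real u) (vsc (-1) x)) (vsc (of_real (1-u)) (vsc (-1) y)) \<in> V"
      using conv that by (simp add: C_def del: vsc_vsc)
    ultimately show ?thesis using that CX by (auto simp: C_def)
  qed
  define Sx where "Sx x = {t::real. t > 0 \<and> vsc (of_real (1/t)) x \<in> C}" for x
  define p where "p x = Inf (Sx x)" for x
  have Sne: "Sx x \<noteq> {}" if xX: "x \<in> X" for x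
  proof -
    obtain e where e: "e > 0" "\<And>c. cmod c < e \<Longrightarrow> vsc c x \<in> C"
      using small_scalar[OF oC zC xX] by blast
    have "cmod (of_real (1 / (2/e))) < e" using e(1) by simp
    then have "2/e \<in> Sx x" using e by (simp add: Sx_def)
    then show ?thesis by blast
  qed
  have Sbdd: "bdd_below (Sx x)" for x unfolding bdd_below_def Sx_def by (rule exI[of _ 0]) auto
  have p_le: "p x \<le> t" if "t \<in> Sx x" for x t unfolding p_def by (rule cInf_lower[OF that Sbdd])
  have p_ge: "p x \<ge> 0" if "x \<in> X" for x
    unfolding p_def by (rule cInf_greatest[OF Sne[OF that]]) (simp add: Sx_def)
  have p_lt: "\<exists>t\<in>Sx x. t < p x + e" if "x \<in> X" "e > 0" for x e
    using cInf_lessD[OF Sne[OF that(1)], of "p x + e"] that(2) by (simp add: p_def)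
  have p_add: "p (vadd x y) \<le> p x + p y" if xy: "x \<in> X" "y \<in> X" for x y
  proof (rule field_le_epsilon)
    fix e :: real assume e: "e > 0"
    obtain s where s: "s \<in> Sx x" "s < p x + e/2" using p_lt[OF xy(1), of "e/2"] e by auto
    obtain t where t: "t \<in> Sx y" "t < p y + e/2" using p_lt[OF xy(2), of "e/2"] e by auto
    have s0: "s > 0" and t0: "t > 0" and sC: "vsc (of_real (1/s)) x \<in> C" and tC: "vsc (of_real (1/t)) y \<in> C"
      using s t by (auto simp: Sx_def)
    define u where "u = s / (s + t)"
    have u: "0 \<le> u" "u \<le> 1" using s0 t0 by (auto simp: u_def)
    have "vadd (vsc (of_real u) (vsc (of_real (1/s)) x)) (vsc (of_real (1-u)) (vsc (of_real (1/t)) y)) \<in> C"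
      by (rule Cconv[OF sC tC u])
    moreover have "vadd (vsc (of_real u) (vsc (of_real (1/s)) x)) (vsc (of_real (1-u)) (vsc (of_real (1/t)) y))
        = vsc (of_real (1/(s+t))) (vadd x y)"
    proof -
      have "1 - u = t / (s + t)" using s0 t0 by (simp add: u_def field_simps)
      then show ?thesis using s0 t0 by (simp add: u_def valg fun_eq_iff field_simps add_divide_distrib del: vsc_vsc)
    qed
    ultimately have "s + t \<in> Sx (vadd x y)" using s0 t0 by (simp add: Sx_def)
    then have "p (vadd x y) \<le> s + t" by (rule p_le)
    then show "p (vadd x y) \<le> p x + p y + e" using s t by simp
  qed
  have p_hom_le: "p (vsc (of_real r) x) \<le> r * p x" if r: "r > 0" and x: "x \<in> X" for r x
  proof (rule field_le_epsilon)
    fix e :: real assume e: "e > 0"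
    obtain t where t: "t \<in> Sx x" "t < p x + e/r" using p_lt[OF x, of "e/r"] e r by auto
    have t0: "t > 0" and tC: "vsc (of_real (1/t)) x \<in> C" using t by (auto simp: Sx_def)
    have "vsc (of_real (1/(r*t))) (vsc (of_real r) x) = vsc (of_real (1/t)) x"
      using r by (simp add: valg fun_eq_iff field_simps)
    then have "r * t \<in> Sx (vsc (of_real r) x)" using tC r t0 by (simp add: Sx_def del: vsc_vsc)
    then have "p (vsc (of_real r) x) \<le> r * t" by (rule p_le)
    also have "r * t \<le> r * (p x + e/r)" using t r by simp
    also have "\<dots> = r * p x + e" using r by (simp add: field_simps)
    finally show "p (vsc (of_real r) x) \<le> r * p x + e" .
  qed
  have p_hom: "p (vsc (of_real r) x) = r * p x" if r: "r > 0" and x: "x \<in> X" for r x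
  proof (rule antisym)
    show "p (vsc (of_real r) x) \<le> r * p x" by (rule p_hom_le[OF r x])
    have "p (vsc (of_real (1/r)) (vsc (of_real r) x)) \<le> (1/r) * p (vsc (of_real r) x)"
      by (rule p_hom_le) (use r x in auto)
    then have "p x \<le> (1/r) * p (vsc (of_real r) x)" using r by simp
    then show "r * p x \<le> p (vsc (of_real r) x)" using r by (simp add: field_simps)
  qed
  have p_neg: "p (vsc (-1) x) = p x" for x
  proof -
    have "Sx (vsc (-1) x) = Sx x"
    proof -
      have "vsc (of_real (1/t)) (vsc (-1) x) = vsc (-1) (vsc (of_real (1/t)) x)" for t
        by (simp add: mult.commute)
      then show ?thesis unfolding Sx_def using Csym by (metis (no_types, opaque_lifting) vsc_vsc vsc_one mult_minus1 minus_minus)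
    qed
    then show ?thesis by (simp add: p_def)
  qed
  have p_small: "p x \<le> t" if "t > 0" "vsc (of_real (1/t)) x \<in> C" for x t
    using p_le that by (simp add: Sx_def)
  define u where "u x = Re (g x)" for x
  have u_le: "u x \<le> p x" if x: "x \<in> P" for x
  proof -
    have "u x \<le> t" if t: "t \<in> Sx x" for t
    proof -
      have t0: "t > 0" and tC: "vsc (of_real (1/t)) x \<in> C" using t by (auto simp: Sx_def)
      have "cmod (g (vsc (of_real (1/t)) x)) < 1" using ObP CO tC Psc[OF x] by blast
      then have "Re (g (vsc (of_real (1/t)) x)) < 1" using complex_Re_le_cmod le_less_trans by blast
      then have "(1/t) * Re (g x) < 1" using g_sc[OF x] by simp
      then show ?thesis using t0 by (simp add: u_def field_simps)
    qed
    then show ?thesis unfolding p_def using Sne x Ph(2) by (intro cInf_greatest) auto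
  qed
  obtain U where U_add: "\<And>x y. x\<in>X \<Longrightarrow> y\<in>X \<Longrightarrow> U (vadd x y) = U x + U y"
    and U_sc: "\<And>r x. x\<in>X \<Longrightarrow> U (vsc (of_real r) x) = r * U x"
    and U_le: "\<And>x. x\<in>X \<Longrightarrow> U x \<le> p x" and U_ext: "\<And>x. x\<in>P \<Longrightarrow> U x = u x"
  proof -
    have u_add: "u (vadd x y) = u x + u y" if "x\<in>P" "y\<in>P" for x y
      using g_add[OF that] by (simp add: u_def)
    have u_sc: "u (vsc (of_real r) x) = r * u x" if "x\<in>P" for r x
      using g_sc[OF that] by (simp add: u_def)
    show ?thesis using HB_real[OF lin Ph u_add u_sc u_le p_add p_hom] that by blast
  qed
  have U_abs: "\<bar>U x\<bar> \<le> p x" if x: "x \<in> X" for x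
  proof -
    have "- U x = U (vsc (of_real (-1)) x)" using U_sc[OF x, of "-1"] by simp
    also have "\<dots> \<le> p (vsc (of_real (-1)) x)" using U_le x by simp
    also have "\<dots> = p x" using p_neg by simp
    finally show ?thesis using U_le[OF x] by linarith
  qed
  define f where "f x = complex_of_real (U x) - \<i> * complex_of_real (U (vsc \<i> x))" for x
  have f_add: "f (vadd x y) = f x + f y" if "x \<in> X" "y \<in> X" for x y
  proof -
    have "vsc \<i> (vadd x y) = vadd (vsc \<i> x) (vsc \<i> y)" by (simp add: valg fun_eq_iff algebra_simps)
    then show ?thesis using that U_add by (simp add: f_def algebra_simps)
  qed
  have f_sc: "f (vsc c x) = c * f x" if x: "x \<in> X" for c x
  proof -
    define a where "a = Re c"
    define b where "b = Im c"
    have ceq: "c = complex_of_real a + \<i> * complex_of_real b" by (simp add: a_def b_def complex_eq)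
    have e1: "vsc c x = vadd (vsc (of_real a) x) (vsc (of_real b) (vsc \<i> x))"
      by (subst ceq) (simp add: valg fun_eq_iff algebra_simps)
    have ic: "\<i> * c = \<i> * complex_of_real a + complex_of_real (-b)"
      by (subst ceq) (simp add: algebra_simps)
    have e2: "vsc \<i> (vsc c x) = vadd (vsc (of_real a) (vsc \<i> x)) (vsc (of_real (-b)) x)"
      unfolding vsc_vsc ic by (simp add: valg fun_eq_iff algebra_simps del: of_real_minus)
    have h1: "U (vsc c x) = a * U x + b * U (vsc \<i> x)"
      unfolding e1 using x by (simp add: U_add U_sc del: vsc_vsc)
    have h2: "U (vsc \<i> (vsc c x)) = a * U (vsc \<i> x) - b * U x"
      unfolding e2 using x by (simp add: U_add U_sc del: vsc_vsc of_real_minus)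
    show ?thesis unfolding f_def h1 h2 by (subst ceq) (simp add: algebra_simps)
  qed
  have f_ext: "f x = g x" if x: "x \<in> P" for x
  proof -
    have "U x = Re (g x)" using U_ext x by (simp add: u_def)
    moreover have "U (vsc \<i> x) = - Im (g x)" using U_ext Psc[OF x] g_sc[OF x] by (simp add: u_def)
    ultimately show ?thesis by (simp add: f_def complex_eq_iff)
  qed
  have f_bound: "cmod (f w) \<le> p w + p (vsc \<i> w)" if w: "w \<in> X" for w
  proof -
    have "cmod (f w) \<le> cmod (complex_of_real (U w)) + cmod (\<i> * complex_of_real (U (vsc \<i> w)))"
      unfolding f_def by (rule norm_triangle_ineq4)
    also have "\<dots> = \<bar>U w\<bar> + \<bar>U (vsc \<i> w)\<bar>" by (simp add: norm_mult)
    also have "\<dots> \<le> p w + p (vsc \<i> w)" using U_abs w by (simp add: add_mono)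
    finally show ?thesis .
  qed
  have fcont: "continuous_map T euclidean f"
    unfolding continuous_map_def
  proof (intro conjI allI impI)
    show "f \<in> topspace T \<rightarrow> topspace euclidean" by simp
    fix W :: "complex set" assume W: "openin euclidean W"
    show "openin T {x \<in> topspace T. f x \<in> W}"
    proof (subst openin_subopen, intro ballI)
      fix x0 assume "x0 \<in> {x \<in> topspace T. f x \<in> W}"
      then have x0: "x0 \<in> X" "f x0 \<in> W" by auto
      have "open W" using W by (simp only: open_openin)
      then obtain e where e: "e > 0" "ball (f x0) e \<subseteq> W" using x0(2) open_contains_ball by blast
      define t where "t = e / 3"
      have t: "t > 0" using e by (simp add: t_def)
      define N0 where "N0 = {w\<in>X. vsc (of_real (1/t)) w \<in> C} \<inter> {w\<in>X. vsc (of_real (1/t)) (vsc \<i> w) \<in> C}"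
      have oN0: "openin T N0"
      proof -
        have c2: "continuous_map T T (\<lambda>w. vsc (of_real (1/t)) (vsc \<i> w))"
          by (rule continuous_map_compose[OF cont_scc cont_scc, unfolded o_def])
        show ?thesis unfolding N0_def by (intro openin_Int open_pre[OF cont_scc oC] open_pre[OF c2 oC])
      qed
      define N where "N = {x\<in>X. vsub x x0 \<in> N0}"
      have oN: "openin T N" unfolding N_def by (rule open_pre[OF cont_trs[OF x0(1)] oN0])
      have x0N: "x0 \<in> N" using x0 zC by (simp add: N_def N0_def)
      have "N \<subseteq> {x \<in> topspace T. f x \<in> W}"
      proof
        fix x assume xN: "x \<in> N"
        then have xX: "x \<in> X" and w: "vsub x x0 \<in> N0" by (auto simp: N_def)
        define w' where "w' = vsub x x0"
        have w'X: "w' \<in> X" using xX x0 by (simp add: w'_def)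
        have "p w' \<le> t" using p_small[OF t] w by (simp add: N0_def w'_def)
        moreover have "p (vsc \<i> w') \<le> t" using p_small[OF t] w by (simp add: N0_def w'_def del: vsc_vsc)
        ultimately have "cmod (f w') < e" using f_bound[OF w'X] t by (simp add: t_def)
        moreover have "f w' = f x - f x0"
        proof -
          have "w' = vadd x (vsc (-1) x0)" by (simp add: w'_def vsub_eq)
          then show ?thesis using f_add f_sc xX x0(1) by simp
        qed
        ultimately have "f x \<in> ball (f x0) e" by (simp add: dist_norm norm_minus_commute)
        then show "x \<in> {x \<in> topspace T. f x \<in> W}" using e xX by auto
      qed
      then show "\<exists>T'. openin T T' \<and> x0 \<in> T' \<and> T' \<subseteq> {x \<in> topspace T. f x \<in> W}"
        using oN x0N by blast
    qed
  qed
  show ?thesis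
    by (rule exI[where x=f]) (use fcont f_add f_sc f_ext in auto)
qed

end


lemma vt_iff: "vector_topology X T \<longleftrightarrow> topspace T = X \<and>
     continuous_map (prod_topology T T) T (\<lambda>(x,y). vadd x y) \<and>
     continuous_map (prod_topology euclidean T) T (\<lambda>(c,x). vsc c x)"
  unfolding vector_topology_def vadd_def vsc_def by simp

lemma ls_iff: "linear_subspace X \<longleftrightarrow> zv \<in> X \<and> (\<forall>x\<in>X. \<forall>y\<in>X. vadd x y \<in> X) \<and> (\<forall>c. \<forall>x\<in>X. vsc c x \<in> X)"
  unfolding linear_subspace_def vadd_def vsc_def zv_def by simp

lemma dual_iff: "f \<in> dual X T \<longleftrightarrow> continuous_map T euclidean f \<and>
     (\<forall>x\<in>X. \<forall>y\<in>X. f (vadd x y) = f x + f y) \<and> (\<forall>c. \<forall>x\<in>X. f (vsc c x) = c * f x)"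
  unfolding dual_def vadd_def vsc_def by simp

lemma FK_parts:
  assumes "FK_space X T"
  shows "tvs X T" "locally_convex T" "completely_metrizable_space T"
    "\<And>j. continuous_map T euclidean (\<lambda>x. x j)"
proof -
  show "tvs X T" using assms by (simp add: FK_space_def tvs_def)
  show "locally_convex T" using assms by (simp add: FK_space_def)
  show "\<And>j. continuous_map T euclidean (\<lambda>x. x j)" using assms by (simp add: FK_space_def)
  obtain d where "Metric_space X d" "Metric_space.mcomplete X d" "Metric_space.mtopology X d = T"
    using assms unfolding FK_space_def complete_metrizable_def by blast
  then show "completely_metrizable_space T" unfolding completely_metrizable_space_def by metis
qed

lemma phi_lin: "linear_subspace phi"
proof -
  have "finite {j. x j + y j \<noteq> 0}" if "finite {j. x j \<noteq> 0}" "finite {j. y j \<noteq> 0}" for x y :: seq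
    by (rule finite_subset[of _ "{j. x j \<noteq> 0} \<union> {j. y j \<noteq> 0}"]) (use that in auto)
  moreover have "finite {j. c * x j \<noteq> 0}" if "finite {j. x j \<noteq> 0}" for c and x :: seq
    by (rule finite_subset[of _ "{j. x j \<noteq> 0}"]) (use that in auto)
  ultimately show ?thesis unfolding linear_subspace_def phi_eq by auto
qed

lemma closure_lin:
  assumes tX: "tvs X T" and L: "linear_subspace L" and LX: "L \<subseteq> X"
  shows "linear_subspace (T closure_of L)"
proof -
  interpret tvs X T by (rule tX)
  have L': "zv \<in> L" "\<And>x y. x\<in>L \<Longrightarrow> y\<in>L \<Longrightarrow> vadd x y \<in> L" "\<And>c x. x\<in>L \<Longrightarrow> vsc c x \<in> L"
    using L unfolding ls_iff by auto
  have "L \<subseteq> T closure_of L" using closure_of_subset[of L T] LX by simp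
  then have "zv \<in> T closure_of L" using L'(1) by blast
  moreover have "vadd x y \<in> T closure_of L" if "x \<in> T closure_of L" "y \<in> T closure_of L" for x y
  proof -
    have "(x,y) \<in> prod_topology T T closure_of (L \<times> L)" using that by (simp add: closure_of_Times)
    then have "(\<lambda>(x,y). vadd x y) (x,y) \<in> T closure_of ((\<lambda>(x,y). vadd x y) ` (L \<times> L))"
      using continuous_map_image_closure_subset[OF cadd] by blast
    moreover have "(\<lambda>(x,y). vadd x y) ` (L \<times> L) \<subseteq> L" using L'(2) by auto
    ultimately have "(\<lambda>(x,y). vadd x y) (x,y) \<in> T closure_of L" using closure_of_mono by blast
    then show ?thesis by simp
  qed
  moreover have "vsc c x \<in> T closure_of L" if "x \<in> T closure_of L" for c x
  proof -
    have "vsc c x \<in> T closure_of ((\<lambda>x. vsc c x) ` L)"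
      using continuous_map_image_closure_subset[OF cont_scc] that by blast
    moreover have "(\<lambda>x. vsc c x) ` L \<subseteq> L" using L'(3) by auto
    ultimately show ?thesis using closure_of_mono by blast
  qed
  ultimately show ?thesis unfolding ls_iff by blast
qed

lemma tvs_sub:
  assumes tX: "tvs X T" and L: "linear_subspace L" and LX: "L \<subseteq> X"
  shows "tvs L (subtopology T L)"
proof -
  interpret tvs X T by (rule tX)
  have L': "\<And>x y. x\<in>L \<Longrightarrow> y\<in>L \<Longrightarrow> vadd x y \<in> L" "\<And>c x. x\<in>L \<Longrightarrow> vsc c x \<in> L"
    using L unfolding ls_iff by auto
  have top: "topspace (subtopology T L) = L" using LX by auto
  have c1: "continuous_map (prod_topology (subtopology T L) (subtopology T L)) T (\<lambda>(x,y). vadd x y)"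
    unfolding prod_topology_subtopology by (intro continuous_map_from_subtopology cadd)
  have c2: "continuous_map (prod_topology euclidean (subtopology T L)) T (\<lambda>(c,x). vsc c x)"
    unfolding prod_topology_subtopology by (intro continuous_map_from_subtopology csc)
  have "continuous_map (prod_topology (subtopology T L) (subtopology T L)) (subtopology T L) (\<lambda>(x,y). vadd x y)"
    unfolding continuous_map_in_subtopology using c1 L'(1) top by auto
  moreover have "continuous_map (prod_topology euclidean (subtopology T L)) (subtopology T L) (\<lambda>(c,x). vsc c x)"
    unfolding continuous_map_in_subtopology using c2 L'(2) top by auto
  ultimately show ?thesis unfolding tvs_def vt_iff using L top by blast
qed

theorem mainTheorem9:
  fixes p q :: "nat \<Rightarrow> nat" and X Y :: "seq set" and T S :: "seq topology"
  assumes pq: "\<And>n. p n < q n"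
    and q_inf: "filterlim q at_top sequentially"
    and FKX: "FK_space X T" and phiX: "phi \<subseteq> X"
    and FKY: "FK_space Y S"
    and sub1: "T closure_of phi \<subseteq> Y" and sub2: "Y \<subseteq> X"
  shows "DqpBplus p q Y S = DqpBplus p q X T"
proof -
  note X = FK_parts[OF FKX]
  note Y = FK_parts[OF FKY]
  interpret X: tvs X T by (rule X(1))
  interpret Y: tvs Y S by (rule Y(1))
  define P where "P = T closure_of phi"
  have PX: "P \<subseteq> X" unfolding P_def using closure_of_subset_topspace[of T phi] by simp
  have phiP: "phi \<subseteq> P" unfolding P_def using phiX closure_of_subset[of phi T] by simp
  have PY: "P \<subseteq> Y" using sub1 by (simp add: P_def)
  have linP: "linear_subspace P" unfolding P_def by (rule closure_lin[OF X(1) phi_lin phiX])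
  have tP: "tvs P (subtopology T P)" by (rule tvs_sub[OF X(1) linP PX])
  have cmP: "completely_metrizable_space (subtopology T P)"
    unfolding P_def by (rule completely_metrizable_space_closedin[OF X(3)]) simp
  have coP: "\<And>j. continuous_map (subtopology T P) euclidean (\<lambda>x. x j)"
    using X(4) by (rule continuous_map_from_subtopology)
  have inclYX: "continuous_map S T (\<lambda>x. x)"
    by (rule incl_cont[OF Y(1) X(1) Y(3) X(3) Y(4) X(4) sub2])
  have inclPY: "continuous_map (subtopology T P) S (\<lambda>x. x)"
    by (rule incl_cont[OF tP Y(1) cmP Y(3) coP Y(4) PY])
  have d1: "f \<in> dual Y S" if f: "f \<in> dual X T" for f
  proof -
    have fc: "continuous_map T euclidean f" using f by (simp add: dual_iff)
    have "continuous_map S euclidean (f \<circ> (\<lambda>x. x))"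
      by (rule continuous_map_compose[OF inclYX fc])
    then have fcS: "continuous_map S euclidean f" by (simp add: o_def)
    have fa: "\<forall>x\<in>X. \<forall>y\<in>X. f (vadd x y) = f x + f y" and fs: "\<forall>c. \<forall>x\<in>X. f (vsc c x) = c * f x"
      using f by (simp_all add: dual_iff)
    have "\<forall>x\<in>Y. \<forall>y\<in>Y. f (vadd x y) = f x + f y" using fa sub2 by blast
    moreover have "\<forall>c. \<forall>x\<in>Y. f (vsc c x) = c * f x" using fs sub2 by blast
    ultimately show ?thesis using fcS by (simp add: dual_iff)
  qed
  have d2: "\<exists>f\<in>dual X T. \<forall>j. f (delta j) = g (delta j)" if g: "g \<in> dual Y S" for g
  proof -
    have gc0: "continuous_map S euclidean g" using g by (simp add: dual_iff)
    have "continuous_map (subtopology T P) euclidean (g \<circ> (\<lambda>x. x))"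
      by (rule continuous_map_compose[OF inclPY gc0])
    then have gc: "continuous_map (subtopology T P) euclidean g" by (simp add: o_def)
    have g_add: "\<And>x y. x\<in>P \<Longrightarrow> y\<in>P \<Longrightarrow> g (vadd x y) = g x + g y"
      using g PY unfolding dual_iff by blast
    have g_sc: "\<And>c x. x\<in>P \<Longrightarrow> g (vsc c x) = c * g x"
      using g PY unfolding dual_iff by blast
    obtain f where f: "continuous_map T euclidean f" "\<forall>x\<in>X. \<forall>y\<in>X. f (vadd x y) = f x + f y"
      "\<forall>c. \<forall>x\<in>X. f (vsc c x) = c * f x" "\<forall>x\<in>P. f x = g x"
      using X.extend[OF X(2) linP PX gc g_add g_sc] by blast
    have "f \<in> dual X T" using f by (simp add: dual_iff)
    moreover have "\<forall>j. f (delta j) = g (delta j)" using f(4) phiP delta_phi by blast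
    ultimately show ?thesis by blast
  qed
  show ?thesis
  proof
    show "DqpBplus p q Y S \<subseteq> DqpBplus p q X T"
      unfolding DqpBplus_def using d1 by blast
    show "DqpBplus p q X T \<subseteq> DqpBplus p q Y S"
    proof
      fix x assume x: "x \<in> DqpBplus p q X T"
      show "x \<in> DqpBplus p q Y S"
        unfolding DqpBplus_def
      proof (intro CollectI ballI)
        fix g assume "g \<in> dual Y S"
        then obtain f where f: "f \<in> dual X T" "\<forall>j. f (delta j) = g (delta j)" using d2 by blast
        then have "bounded (range (\<lambda>n. (1 / of_nat (q n - p n)) * (\<Sum>k\<in>{p n..<q n}. \<Sum>j\<in>{0..k}. x j * f (delta j))))"
          using x unfolding DqpBplus_def by blast
        then show "bounded (range (\<lambda>n. (1 / of_nat (q n - p n)) * (\<Sum>k\<in>{p n..<q n}. \<Sum>j\<in>{0..k}. x j * g (delta j))))"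
          using f(2) by simp
      qed
    qed
  qed
qed


end
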